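(* Any edge-to-edge tiling of the sphere by quadrilaterals in which every vertex has degree $\ge 3$ contains a tile whose four vertices have degrees (in some order) $3,3,3,d$ with $d\ge3$; or $3,3,4,d$ with $4\le d\le 11$; or $3,3,5,d$ with $d\in\{5,6,7\}$; or $3,4,4,d$ with $d\in\{4,5\}$.
   Context: The degree of a vertex is the number of edges (equivalently, tile corners) at that vertex. *)

theory Defs
  imports "HOL-Combinatorics.Orbits" "HOL-Library.Multiset"
begin

text \<open>A map is given by a finite set of darts D,
  a fixed-point-free involution alpha on D (edges) and a permutation sigma of D
  (cyclic order of darts around each vertex).
  Every dart of a face orbit corresponds to one corner of that tile.\<close>

definition map_vertices :: "'a set \<Rightarrow> ('a \<Rightarrow> 'a) \<Rightarrow> 'a set set" where
  "map_vertices D sigma = (\<lambda>x. orbit sigma x) ` D"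

definition map_edges :: "'a set \<Rightarrow> ('a \<Rightarrow> 'a) \<Rightarrow> 'a set set" where
  "map_edges D alpha = (\<lambda>x. orbit alpha x) ` D"

definition map_faces :: "'a set \<Rightarrow> ('a \<Rightarrow> 'a) \<Rightarrow> ('a \<Rightarrow> 'a) \<Rightarrow> 'a set set" where
  "map_faces D alpha sigma = (\<lambda>x. orbit (sigma \<circ> alpha) x) ` D"

definition comb_map :: "'a set \<Rightarrow> ('a \<Rightarrow> 'a) \<Rightarrow> ('a \<Rightarrow> 'a) \<Rightarrow> bool" where
  "comb_map D alpha sigma \<longleftrightarrow>
     finite D \<and> D \<noteq> {} \<and> alpha permutes D \<and> sigma permutes D \<and>
     (\<forall>x\<in>D. alpha (alpha x) = x \<and> alpha x \<noteq> x)"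

definition map_connected :: "'a set \<Rightarrow> ('a \<Rightarrow> 'a) \<Rightarrow> ('a \<Rightarrow> 'a) \<Rightarrow> bool" where
  "map_connected D alpha sigma \<longleftrightarrow>
     (\<forall>x\<in>D. \<forall>y\<in>D. (x, y) \<in> {(u, v). v = alpha u \<or> v = sigma u}\<^sup>*)"

definition spherical_map :: "'a set \<Rightarrow> ('a \<Rightarrow> 'a) \<Rightarrow> ('a \<Rightarrow> 'a) \<Rightarrow> bool" where
  "spherical_map D alpha sigma \<longleftrightarrow>
     comb_map D alpha sigma \<and> map_connected D alpha sigma \<and>
     int (card (map_vertices D sigma)) - int (card (map_edges D alpha))
       + int (card (map_faces D alpha sigma)) = 2"

definition vdeg :: "('a \<Rightarrow> 'a) \<Rightarrow> 'a \<Rightarrow> nat" where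
  "vdeg sigma x = card (orbit sigma x)"

definition quad_tiling :: "'a set \<Rightarrow> ('a \<Rightarrow> 'a) \<Rightarrow> ('a \<Rightarrow> 'a) \<Rightarrow> bool" where
  "quad_tiling D alpha sigma \<longleftrightarrow>
     spherical_map D alpha sigma \<and>
     (\<forall>x\<in>D. card (orbit (sigma \<circ> alpha) x) = 4 \<and>
             card ((\<lambda>y. orbit sigma y) ` orbit (sigma \<circ> alpha) x) = 4)"

definition tile_degrees :: "('a \<Rightarrow> 'a) \<Rightarrow> ('a \<Rightarrow> 'a) \<Rightarrow> 'a \<Rightarrow> nat multiset" where
  "tile_degrees alpha sigma x = image_mset (vdeg sigma) (mset_set (orbit (sigma \<circ> alpha) x))"

end

theory Submission
  imports Defs Complex_Main
begin

lemma inv_le: "(k::nat) \<ge> 1 \<Longrightarrow> k \<le> d \<Longrightarrow> 1 / real d \<le> 1 / real k"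
  by (simp add: frac_le)

lemma sorted_case:
  fixes a b c d :: nat
  assumes "3 \<le> a" "a \<le> b" "b \<le> c" "c \<le> d"
    and s: "1/real a + 1/real b + 1/real c + 1/real d > 1"
  shows "(a=3 \<and> b=3 \<and> c=3) \<or> (a=3 \<and> b=3 \<and> c=4 \<and> d \<le> 11) \<or>
         (a=3 \<and> b=3 \<and> c=5 \<and> d \<le> 7) \<or> (a=3 \<and> b=4 \<and> c=4 \<and> d \<le> 5)"
proof -
  have ia: "1/real a \<le> 1/3" using inv_le[of 3 a] assms by simp
  have ib: "1/real b \<le> 1/real a" using inv_le[of a b] assms by simp
  have ic: "1/real c \<le> 1/real b" using inv_le[of b c] assms by simp
  have id: "1/real d \<le> 1/real c" using inv_le[of c d] assms by simp
  have a3: "a = 3"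
  proof (rule ccontr)
    assume "a \<noteq> 3" then have "1/real a \<le> 1/4" using inv_le[of 4 a] assms by simp
    then show False using ib ic id s by linarith
  qed
  show ?thesis
  proof (cases "b = 3")
    case b3: True
    show ?thesis
    proof (cases "c = 3")
      case True then show ?thesis using a3 b3 by simp
    next
      case c: False
      show ?thesis
      proof (cases "c = 4")
        case c4: True
        have "d \<le> 11"
        proof (rule ccontr)
          assume "\<not> d \<le> 11" then have "1/real d \<le> 1/12" using inv_le[of 12 d] by simp
          then show False using s a3 b3 c4 by simp
        qed
        then show ?thesis using a3 b3 c4 by simp
      next
        case c4: False
        show ?thesis
        proof (cases "c = 5")
          case c5: True
          have "d \<le> 7"
          proof (rule ccontr)
            assume "\<not> d \<le> 7" then have "1/real d \<le> 1/8" using inv_le[of 8 d] by simp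
            then show False using s a3 b3 c5 by simp
          qed
          then show ?thesis using a3 b3 c5 by simp
        next
          case False
          then have "1/real c \<le> 1/6" using inv_le[of 6 c] c c4 assms by simp
          then show ?thesis using s a3 b3 id by simp
        qed
      qed
    qed
  next
    case b3: False
    show ?thesis
    proof (cases "b = 4")
      case b4: True
      show ?thesis
      proof (cases "c = 4")
        case c4: True
        have "d \<le> 5"
        proof (rule ccontr)
          assume "\<not> d \<le> 5" then have "1/real d \<le> 1/6" using inv_le[of 6 d] by simp
          then show False using s a3 b4 c4 by simp
        qed
        then show ?thesis using a3 b4 c4 by simp
      next
        case False
        then have "1/real c \<le> 1/5" using inv_le[of 5 c] b4 assms by simp
        then show ?thesis using s a3 b4 id by simp
      qed
    next
      case False
      then have "1/real b \<le> 1/5" using inv_le[of 5 b] b3 a3 assms by simp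
      then show ?thesis using s a3 ic id by simp
    qed
  qed
qed


lemma mset_case:
  fixes M :: "nat multiset"
  assumes "size M = 4" "\<forall>d\<in>#M. d \<ge> 3" "(\<Sum>d\<in>#M. 1 / real d) > 1"
  shows "\<exists>d::nat.
           (M = {#3, 3, 3, d#} \<and> 3 \<le> d) \<or>
           (M = {#3, 3, 4, d#} \<and> 4 \<le> d \<and> d \<le> 11) \<or>
           (M = {#3, 3, 5, d#} \<and> d \<in> {5, 6, 7}) \<or>
           (M = {#3, 4, 4, d#} \<and> d \<in> {4, 5})"
proof -
  define xs where "xs = sorted_list_of_multiset M"
  have m: "mset xs = M" unfolding xs_def by simp
  have so: "sorted xs" unfolding xs_def by simp
  have "length xs = 4" using assms(1) m by (metis size_mset)
  then obtain a b c d where xs: "xs = [a,b,c,d]"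
    by (auto simp: numeral_eq_Suc length_Suc_conv)
  have M: "M = {#a,b,c,d#}" using m xs by simp
  have o: "a \<le> b" "b \<le> c" "c \<le> d" using so xs by auto
  have a3: "3 \<le> a" using assms(2) M by simp
  have s: "1/real a + 1/real b + 1/real c + 1/real d > 1" using assms(3) M by (simp add: add.assoc)
  from sorted_case[OF a3 o s] show ?thesis unfolding M using o
    by (elim disjE) (auto intro!: exI[of _ d])
qed


lemma orb_self: "f permutes D \<Longrightarrow> finite D \<Longrightarrow> x \<in> orbit f x"
  by (rule permutation_self_in_orbit) (auto simp: permutation_permutes)

lemma orb_eq: "f permutes D \<Longrightarrow> finite D \<Longrightarrow> y \<in> orbit f x \<Longrightarrow> orbit f y = orbit f x"
  by (metis cyclic_on_orbit orbit_cyclic_eq3)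

lemma orb_sum:
  assumes "f permutes D" "finite D"
  shows "(\<Sum>x\<in>D. g x) = (\<Sum>B\<in>(\<lambda>x. orbit f x) ` D. \<Sum>x\<in>B. g x)"
proof -
  have "(\<Sum>x\<in>D. g x) = (\<Sum>B\<in>(\<lambda>x. orbit f x) ` D. \<Sum>x\<in>{x. x \<in> D \<and> orbit f x = B}. g x)"
    by (rule sum.image_gen[OF assms(2)])
  also have "\<dots> = (\<Sum>B\<in>(\<lambda>x. orbit f x) ` D. \<Sum>x\<in>B. g x)"
  proof (rule sum.cong[OF refl])
    fix B assume "B \<in> (\<lambda>x. orbit f x) ` D"
    then obtain y where y: "y \<in> D" "B = orbit f y" by auto
    have "{x. x \<in> D \<and> orbit f x = B} = B"
      using y orb_self[OF assms] orb_eq[OF assms] permutes_orbit_subset[OF assms(1)]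
      by blast
    then show "(\<Sum>x\<in>{x. x \<in> D \<and> orbit f x = B}. g x) = (\<Sum>x\<in>B. g x)" by simp
  qed
  finally show ?thesis .
qed

lemma card_D:
  assumes "f permutes D" "finite D" "\<And>x. x \<in> D \<Longrightarrow> card (orbit f x) = k"
  shows "card D = k * card ((\<lambda>x. orbit f x) ` D)"
proof -
  have "card D = (\<Sum>x\<in>D. 1::nat)" by simp
  also have "\<dots> = (\<Sum>B\<in>(\<lambda>x. orbit f x) ` D. \<Sum>x\<in>B. 1)" by (rule orb_sum[OF assms(1,2)])
  also have "\<dots> = (\<Sum>B\<in>(\<lambda>x. orbit f x) ` D. card B)" by simp
  also have "\<dots> = (\<Sum>B\<in>(\<lambda>x. orbit f x) ` D. k)" using assms(3) by (intro sum.cong) auto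
  finally show ?thesis by simp
qed

theorem lemma1:
  fixes D :: "'a set" and alpha sigma :: "'a \<Rightarrow> 'a"
  assumes "quad_tiling D alpha sigma"
    and "\<forall>x\<in>D. vdeg sigma x \<ge> 3"
  shows "\<exists>x\<in>D. \<exists>d::nat.
           (tile_degrees alpha sigma x = {#3, 3, 3, d#} \<and> 3 \<le> d) \<or>
           (tile_degrees alpha sigma x = {#3, 3, 4, d#} \<and> 4 \<le> d \<and> d \<le> 11) \<or>
           (tile_degrees alpha sigma x = {#3, 3, 5, d#} \<and> d \<in> {5, 6, 7}) \<or>
           (tile_degrees alpha sigma x = {#3, 4, 4, d#} \<and> d \<in> {4, 5})"
proof -
  have fin: "finite D" and pa: "alpha permutes D" and ps: "sigma permutes D"
    and inv: "\<forall>x\<in>D. alpha (alpha x) = x \<and> alpha x \<noteq> x"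
    and eul: "int (card (map_vertices D sigma)) - int (card (map_edges D alpha))
       + int (card (map_faces D alpha sigma)) = 2"
    and fc: "\<forall>x\<in>D. card (orbit (sigma \<circ> alpha) x) = 4"
    using assms(1) unfolding quad_tiling_def spherical_map_def comb_map_def by auto
  have pf: "(sigma \<circ> alpha) permutes D" using pa ps by (rule permutes_compose)
  have e2: "card (orbit alpha x) = 2" if x: "x \<in> D" for x
  proof -
    have "orbit alpha x = {(alpha ^^ m) x | m. m < 2}"
      by (rule orbit_altdef_bounded) (use inv x in \<open>auto simp: numeral_eq_Suc\<close>)
    also have "\<dots> = {x, alpha x}" by (auto simp: numeral_eq_Suc less_Suc_eq intro: exI[of _ 0] exI[of _ "Suc 0"])
    finally show ?thesis using inv x by auto
  qed
  have cE: "card D = 2 * card (map_edges D alpha)"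
    unfolding map_edges_def by (rule card_D[OF pa fin e2])
  have cF: "card D = 4 * card (map_faces D alpha sigma)"
    unfolding map_faces_def by (rule card_D[OF pf fin]) (use fc in auto)
  define f where "f x = (4 - real (vdeg sigma x)) / real (vdeg sigma x)" for x
  have "(\<Sum>x\<in>D. f x) = (\<Sum>B\<in>map_vertices D sigma. \<Sum>x\<in>B. f x)"
    unfolding map_vertices_def by (rule orb_sum[OF ps fin])
  also have "\<dots> = (\<Sum>B\<in>map_vertices D sigma. 4 - real (card B))"
  proof (rule sum.cong[OF refl])
    fix B assume "B \<in> map_vertices D sigma"
    then obtain y where y: "y \<in> D" "B = orbit sigma y" unfolding map_vertices_def by auto
    have fB: "finite B" using y permutes_orbit_subset[OF ps] fin finite_subset by metis
    have "B \<noteq> {}" using y orbit_nonempty by metis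
    then have cB: "card B > 0" using fB by auto
    have "(\<Sum>x\<in>B. f x) = (\<Sum>x\<in>B. (4 - real (card B)) / real (card B))"
      using y orb_eq[OF ps fin] unfolding f_def vdeg_def by (intro sum.cong) auto
    also have "\<dots> = 4 - real (card B)" using cB by simp
    finally show "(\<Sum>x\<in>B. f x) = 4 - real (card B)" .
  qed
  also have "\<dots> = 4 * real (card (map_vertices D sigma)) - real (\<Sum>B\<in>map_vertices D sigma. card B)"
    by (simp add: sum_subtractf)
  also have "(\<Sum>B\<in>map_vertices D sigma. card B) = card D"
  proof -
    have "(\<Sum>x\<in>D. 1::nat) = (\<Sum>B\<in>map_vertices D sigma. \<Sum>x\<in>B. 1)"
      unfolding map_vertices_def by (rule orb_sum[OF ps fin])
    then show ?thesis by simp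
  qed
  finally have S1: "(\<Sum>x\<in>D. f x) = 4 * real (card (map_vertices D sigma)) - real (card D)" .
  have S8: "(\<Sum>x\<in>D. f x) = 8"
    unfolding S1 using eul cE cF by linarith
  have "(\<Sum>x\<in>D. f x) = (\<Sum>B\<in>map_faces D alpha sigma. \<Sum>x\<in>B. f x)"
    unfolding map_faces_def by (rule orb_sum[OF pf fin])
  then obtain B where B: "B \<in> map_faces D alpha sigma" "(\<Sum>x\<in>B. f x) > 0"
    using S8 by (metis less_numeral_extra(3) not_less sum_nonpos zero_less_numeral)
  then obtain x0 where x0: "x0 \<in> D" "B = orbit (sigma \<circ> alpha) x0"
    unfolding map_faces_def by auto
  have BD: "B \<subseteq> D" using x0 permutes_orbit_subset[OF pf] by auto
  have cB: "card B = 4" using fc x0 by auto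
  have fB: "finite B" using BD fin finite_subset by auto
  have deg: "\<And>y. y \<in> B \<Longrightarrow> vdeg sigma y \<ge> 3" using BD assms(2) by auto
  let ?M = "tile_degrees alpha sigma x0"
  have M: "?M = image_mset (vdeg sigma) (mset_set B)" unfolding tile_degrees_def x0 ..
  have "(\<Sum>x\<in>B. f x) = (\<Sum>x\<in>B. 4 * (1 / real (vdeg sigma x)) - 1)"
  proof (rule sum.cong[OF refl])
    fix x assume "x \<in> B"
    then have "real (vdeg sigma x) > 0" using deg[of x] by simp
    then show "f x = 4 * (1 / real (vdeg sigma x)) - 1" unfolding f_def by (simp add: field_simps)
  qed
  also have "\<dots> = 4 * (\<Sum>x\<in>B. 1 / real (vdeg sigma x)) - 4"
    using cB by (simp add: sum_subtractf sum_distrib_left)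
  finally have "(\<Sum>x\<in>B. 1 / real (vdeg sigma x)) > 1" using B(2) by linarith
  moreover have "(\<Sum>x\<in>B. 1 / real (vdeg sigma x)) = (\<Sum>d\<in>#?M. 1 / real d)"
    unfolding M sum_unfold_sum_mset by (simp add: image_mset.compositionality comp_def)
  ultimately have s: "(\<Sum>d\<in>#?M. 1 / real d) > 1" by simp
  have sz: "size ?M = 4" unfolding M using cB by simp
  have ge: "\<forall>d\<in>#?M. d \<ge> 3" unfolding M using fB deg by auto
  show ?thesis using mset_case[OF sz ge s] x0(1) by blast
qed

end
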